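(* Let $\Gamma$ be a finite dynamic game with ordinal preferences and perfect recall. Then $\mathbb S^k(S)\neq\emptyset$ for every $k\in\mathbb N$ (so $\mathbb S^\infty(S)\ne\emptyset$), and there exists $K\in\mathbb N$ with $\mathbb S^K(S)=\mathbb S^{K+1}(S)=\mathbb S^\infty(S)\neq\emptyset$.
   Context: A finite dynamic game with ordinal preferences and perfect recall $\Gamma$ consists of: a finite set of players $I$; a finite rooted tree of histories (finite sequences of action profiles, simultaneous moves allowed) with terminal histories $Z$; for each $i$ a partition $H_i$ of the non-terminal histories where $i$ is active (at least two actions) into information sets with identical available actions; perfect recall; complete transitive preferences $\succsim_i$ on $Z$. Strategies of $i$ are equivalence classes of behaviorally equivalent standard strategies (action assignments to $H_i$, identified when they allow the same information sets and prescribe the same actions there); $S_i$ finite set of strategies, $S=\prod_jS_j$, $S_{-i}=\prod_{j\ne i}S_j$, $\zeta:S\to Z$ the outcome map. For $h\in H_i$, $S_i(h)$, $S_{-i}(h)$ are strategies of $i$, resp. profiles of others, reaching $h$; $H_i(s_i)=\{h\in H_i:s_i\in S_i(h)\}$. A restriction is a nonempty $R=\prod_jR_j\subseteq S$; $R_i(h)=R_i\cap S_i(h)$, $R_{-i}(h)=R_{-i}\cap S_{-i}(h)$, $R^i(h)=R_i(h)\times R_{-i}(h)$. $\mathcal U_i$ is the set of $u_i:Z\to\mathbb R$ with $u_i(z)\ge u_i(z')\iff z\succsim_iz'$. $\mathcal H_i=\{S_{-i}(h):h\in H_i\}$; a CPS on $(S_{-i},\mathcal H_i)$ is a family of probability measures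 $\mu_i(\cdot\mid E)$ on $S_{-i}$, $E\in\mathcal H_i$, with $\mu_i(E\mid E)=1$ and $\mu_i(A\mid E)=\mu_i(A\mid E')\mu_i(E'\mid E)$ whenever $A\subseteq E'\subseteq E$, $E,E'\in\mathcal H_i$. $\Delta^{\mathcal H_i}(R_{-i})$ is the set of CPSs with $\mu_i(R_{-i}(h)\mid S_{-i}(h))=1$ for every $h\in H_i$ with $R^i(h)\ne\emptyset$. $s^*_i\in R_i$ is sequentially rational given $R$ if there are $u_i\in\mathcal U_i$, $\mu_i\in\Delta^{\mathcal H_i}(R_{-i})$ such that for all $h\in H_i(s^*_i)$ with $R^i(h)\ne\emptyset$ and all $s_i\in R_i(h)$, $\sum_{s_{-i}\in R_{-i}}u_i(\zeta(s^*_i,s_{-i}))\mu_i(\{s_{-i}\}\mid S_{-i}(h))\ge\sum_{s_{-i}\in R_{-i}}u_i(\zeta(s_i,s_{-i}))\mu_i(\{s_{-i}\}\mid S_{-i}(h))$. Ordinal Strong Rationalizability: $\mathbb S_i(R)$ is the set of $s_i\in R_i$ sequentially rational given $R$, $\mathbb S(R)=\prod_j\mathbb S_j(R)$, $\mathbb S^0(S)=S$, $\mathbb S^n(S)=\mathbb S(\mathbb S^{n-1}(S))$, $\mathbb S^\infty(S)=\bigcap_\ell\mathbb S^\ell(S)$. *)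

theory Defs
  imports Complex_Main
begin

text \<open>Players form a finite type 'i (the finite player set I is UNIV).  An action profile is a function 'i => 'a (simultaneous moves); inactive players
have a single feasible action.\<close>

type_synonym ('i, 'a) hist = "('i \<Rightarrow> 'a) list"
type_synonym ('i, 'a) infoset = "('i, 'a) hist set"
type_synonym ('i, 'a) stdstrat = "('i, 'a) infoset \<Rightarrow> 'a"
type_synonym ('i, 'a) strat = "('i, 'a) stdstrat set"   \<comment> \<open>equivalence class\<close>
type_synonym ('i, 'a) profile = "'i \<Rightarrow> ('i, 'a) strat"

record ('i, 'a) game =
  hist :: "('i, 'a) hist set"
  infos :: "'i \<Rightarrow> ('i, 'a) infoset set"
  pref :: "'i \<Rightarrow> ('i, 'a) hist \<Rightarrow> ('i, 'a) hist \<Rightarrow> bool" \<comment> \<open>pref G i z z' : z \<succeq>_i z'\<close>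

definition terminal :: "('i, 'a) game \<Rightarrow> ('i, 'a) hist set" where
  "terminal G = {z \<in> hist G. \<not> (\<exists>p. z @ [p] \<in> hist G)}"

definition acts :: "('i, 'a) game \<Rightarrow> 'i \<Rightarrow> ('i, 'a) hist \<Rightarrow> 'a set" where
  "acts G i x = {a. \<exists>p. x @ [p] \<in> hist G \<and> p i = a}"

definition active :: "('i, 'a) game \<Rightarrow> 'i \<Rightarrow> ('i, 'a) hist \<Rightarrow> bool" where
  "active G i x \<longleftrightarrow> x \<in> hist G - terminal G \<and> card (acts G i x) \<ge> 2"

definition cellof :: "('i, 'a) game \<Rightarrow> 'i \<Rightarrow> ('i, 'a) hist \<Rightarrow> ('i, 'a) infoset" where
  "cellof G i x = (THE C. C \<in> infos G i \<and> x \<in> C)"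

definition experience :: "('i, 'a) game \<Rightarrow> 'i \<Rightarrow> ('i, 'a) hist \<Rightarrow> (('i, 'a) infoset \<times> 'a) list" where
  "experience G i x =
     map (\<lambda>k. (cellof G i (take k x), (x ! k) i)) (filter (\<lambda>k. active G i (take k x)) [0..<length x])"

definition finite_game :: "('i::finite, 'a) game \<Rightarrow> bool" where
  "finite_game G \<longleftrightarrow>
     finite (hist G) \<and> [] \<in> hist G
     \<and> (\<forall>x y. x @ y \<in> hist G \<longrightarrow> x \<in> hist G)
     \<and> (\<forall>x \<in> hist G - terminal G. \<forall>p. x @ [p] \<in> hist G \<longleftrightarrow> (\<forall>j. p j \<in> acts G j x))
     \<and> (\<forall>i. (\<forall>C \<in> infos G i. C \<noteq> {})
           \<and> (\<forall>C \<in> infos G i. \<forall>D \<in> infos G i. C \<noteq> D \<longrightarrow> C \<inter> D = {})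
           \<and> \<Union>(infos G i) = {x. active G i x}
           \<and> (\<forall>C \<in> infos G i. \<forall>x \<in> C. \<forall>y \<in> C. acts G i x = acts G i y))
     \<and> (\<forall>i. \<forall>C \<in> infos G i. \<forall>x \<in> C. \<forall>y \<in> C. experience G i x = experience G i y)
     \<and> (\<forall>i. (\<forall>z \<in> terminal G. \<forall>z' \<in> terminal G. pref G i z z' \<or> pref G i z' z)
           \<and> (\<forall>z1 \<in> terminal G. \<forall>z2 \<in> terminal G. \<forall>z3 \<in> terminal G.
                 pref G i z1 z2 \<longrightarrow> pref G i z2 z3 \<longrightarrow> pref G i z1 z3))"

definition stdstrats :: "('i, 'a) game \<Rightarrow> 'i \<Rightarrow> ('i, 'a) stdstrat set" where
  "stdstrats G i = {\<sigma>. (\<forall>C \<in> infos G i. \<forall>x \<in> C. \<sigma> C \<in> acts G i x)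
                      \<and> (\<forall>C. C \<notin> infos G i \<longrightarrow> \<sigma> C = undefined)}"

definition consistent :: "('i, 'a) game \<Rightarrow> 'i \<Rightarrow> ('i, 'a) stdstrat \<Rightarrow> ('i, 'a) hist \<Rightarrow> bool" where
  "consistent G i \<sigma> x \<longleftrightarrow>
     (\<forall>k < length x. active G i (take k x) \<longrightarrow> (x ! k) i = \<sigma> (cellof G i (take k x)))"

definition allows :: "('i, 'a) game \<Rightarrow> 'i \<Rightarrow> ('i, 'a) stdstrat \<Rightarrow> ('i, 'a) infoset \<Rightarrow> bool" where
  "allows G i \<sigma> C \<longleftrightarrow> (\<exists>x \<in> C. consistent G i \<sigma> x)"

definition beq :: "('i, 'a) game \<Rightarrow> 'i \<Rightarrow> ('i, 'a) stdstrat rel" where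
  "beq G i = {(\<sigma>, \<tau>). \<sigma> \<in> stdstrats G i \<and> \<tau> \<in> stdstrats G i
       \<and> {C \<in> infos G i. allows G i \<sigma> C} = {C \<in> infos G i. allows G i \<tau> C}
       \<and> (\<forall>C \<in> infos G i. allows G i \<sigma> C \<longrightarrow> \<sigma> C = \<tau> C)}"

definition strats :: "('i, 'a) game \<Rightarrow> 'i \<Rightarrow> ('i, 'a) strat set" where
  "strats G i = stdstrats G i // beq G i"

definition cconsistent :: "('i, 'a) game \<Rightarrow> 'i \<Rightarrow> ('i, 'a) strat \<Rightarrow> ('i, 'a) hist \<Rightarrow> bool" where
  "cconsistent G i c x \<longleftrightarrow> (\<exists>\<sigma> \<in> c. consistent G i \<sigma> x)"

definition outcome :: "('i, 'a) game \<Rightarrow> ('i, 'a) profile \<Rightarrow> ('i, 'a) hist" where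
  "outcome G s = (THE z. z \<in> terminal G \<and> (\<forall>j. cconsistent G j (s j) z))"

text \<open>Opponents' profiles s_{-i} are functions undefined at i, with components in R_j.\<close>
definition others :: "'i \<Rightarrow> ('i \<Rightarrow> ('i, 'a) strat set) \<Rightarrow> ('i, 'a) profile set" where
  "others i R = {f. (\<forall>j. j \<noteq> i \<longrightarrow> f j \<in> R j) \<and> f i = undefined}"

definition strats_at :: "('i, 'a) game \<Rightarrow> 'i \<Rightarrow> ('i, 'a) infoset \<Rightarrow> ('i, 'a) strat set" where
  "strats_at G i h = {c \<in> strats G i. \<exists>x \<in> h. cconsistent G i c x}"

definition others_at :: "('i, 'a) game \<Rightarrow> 'i \<Rightarrow> ('i, 'a) infoset \<Rightarrow> ('i, 'a) profile set" where
  "others_at G i h = {f \<in> others i (strats G). \<exists>x \<in> h. \<forall>j. j \<noteq> i \<longrightarrow> cconsistent G j (f j) x}"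

definition infos_of :: "('i, 'a) game \<Rightarrow> 'i \<Rightarrow> ('i, 'a) strat \<Rightarrow> ('i, 'a) infoset set" where
  "infos_of G i c = {h \<in> infos G i. c \<in> strats_at G i h}"

definition utils :: "('i, 'a) game \<Rightarrow> 'i \<Rightarrow> (('i, 'a) hist \<Rightarrow> real) set" where
  "utils G i = {u. \<forall>z \<in> terminal G. \<forall>z' \<in> terminal G. u z \<ge> u z' \<longleftrightarrow> pref G i z z'}"

text \<open>A CPS is given by point masses \<mu> E t = \<mu>(\<lbrace>t\<rbrace> | E); the space S_{-i} is finite.\<close>
definition cprob :: "(('i, 'a) profile set \<Rightarrow> ('i, 'a) profile \<Rightarrow> real)
                     \<Rightarrow> ('i, 'a) profile set \<Rightarrow> ('i, 'a) profile set \<Rightarrow> real" where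
  "cprob \<mu> A E = (\<Sum>t \<in> A. \<mu> E t)"

definition cond_events :: "('i, 'a) game \<Rightarrow> 'i \<Rightarrow> ('i, 'a) profile set set" where
  "cond_events G i = {others_at G i h | h. h \<in> infos G i}"

definition is_cps :: "('i, 'a) game \<Rightarrow> 'i
                      \<Rightarrow> (('i, 'a) profile set \<Rightarrow> ('i, 'a) profile \<Rightarrow> real) \<Rightarrow> bool" where
  "is_cps G i \<mu> \<longleftrightarrow>
     (\<forall>E \<in> cond_events G i.
        (\<forall>t \<in> others i (strats G). \<mu> E t \<ge> 0)
        \<and> cprob \<mu> (others i (strats G)) E = 1
        \<and> cprob \<mu> E E = 1)
     \<and> (\<forall>E \<in> cond_events G i. \<forall>E' \<in> cond_events G i. \<forall>A. A \<subseteq> E' \<longrightarrow> E' \<subseteq> E \<longrightarrow>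
          cprob \<mu> A E = cprob \<mu> A E' * cprob \<mu> E' E)"

definition restr_at :: "('i, 'a) game \<Rightarrow> 'i \<Rightarrow> ('i \<Rightarrow> ('i, 'a) strat set) \<Rightarrow> ('i, 'a) infoset
                        \<Rightarrow> ('i, 'a) strat set" where
  "restr_at G i R h = R i \<inter> strats_at G i h"

definition restr_others_at :: "('i, 'a) game \<Rightarrow> 'i \<Rightarrow> ('i \<Rightarrow> ('i, 'a) strat set) \<Rightarrow> ('i, 'a) infoset
                        \<Rightarrow> ('i, 'a) profile set" where
  "restr_others_at G i R h = others i R \<inter> others_at G i h"

definition cps_given :: "('i, 'a) game \<Rightarrow> 'i \<Rightarrow> ('i \<Rightarrow> ('i, 'a) strat set)
                         \<Rightarrow> (('i, 'a) profile set \<Rightarrow> ('i, 'a) profile \<Rightarrow> real) set" where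
  "cps_given G i R = {\<mu>. is_cps G i \<mu> \<and>
     (\<forall>h \<in> infos G i. restr_at G i R h \<noteq> {} \<and> restr_others_at G i R h \<noteq> {} \<longrightarrow>
        cprob \<mu> (restr_others_at G i R h) (others_at G i h) = 1)}"

definition seq_rational :: "('i, 'a) game \<Rightarrow> 'i \<Rightarrow> ('i \<Rightarrow> ('i, 'a) strat set) \<Rightarrow> ('i, 'a) strat \<Rightarrow> bool" where
  "seq_rational G i R s \<longleftrightarrow> s \<in> R i \<and>
     (\<exists>u \<in> utils G i. \<exists>\<mu> \<in> cps_given G i R.
        \<forall>h \<in> infos_of G i s. restr_at G i R h \<noteq> {} \<and> restr_others_at G i R h \<noteq> {} \<longrightarrow>
          (\<forall>s' \<in> restr_at G i R h.
             (\<Sum>t \<in> others i R. u (outcome G (t(i := s))) * \<mu> (others_at G i h) t)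
             \<ge> (\<Sum>t \<in> others i R. u (outcome G (t(i := s'))) * \<mu> (others_at G i h) t)))"

text \<open>A restriction is represented by its factors R_j; the restriction itself is
  the product set prodR R.\<close>
definition prodR :: "('i \<Rightarrow> ('i, 'a) strat set) \<Rightarrow> ('i, 'a) profile set" where
  "prodR R = {s. \<forall>j. s j \<in> R j}"

definition osr_step :: "('i, 'a) game \<Rightarrow> ('i \<Rightarrow> ('i, 'a) strat set) \<Rightarrow> ('i \<Rightarrow> ('i, 'a) strat set)" where
  "osr_step G R = (\<lambda>i. {s \<in> R i. seq_rational G i R s})"

definition osr :: "('i, 'a) game \<Rightarrow> nat \<Rightarrow> ('i \<Rightarrow> ('i, 'a) strat set)" where
  "osr G n = (osr_step G ^^ n) (strats G)"

definition osr_inf :: "('i, 'a) game \<Rightarrow> ('i, 'a) profile set" where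
  "osr_inf G = (\<Inter>l. prodR (osr G l))"

end

theory Submission
  imports Defs
begin

lemma fg_P1: assumes "finite_game G" shows "finite (hist G)"
  using assms unfolding finite_game_def by (elim conjE) assumption

lemma fg_P2: assumes "finite_game G" shows "[] \<in> hist G"
  using assms unfolding finite_game_def by (elim conjE) assumption

lemma fg_P3: assumes "finite_game G" shows "\<forall>x y. x @ y \<in> hist G \<longrightarrow> x \<in> hist G"
  using assms unfolding finite_game_def by (elim conjE) assumption

lemma fg_P5: assumes "finite_game G" shows "\<forall>i. (\<forall>C \<in> infos G i. C \<noteq> {})
           \<and> (\<forall>C \<in> infos G i. \<forall>D \<in> infos G i. C \<noteq> D \<longrightarrow> C \<inter> D = {})
           \<and> \<Union>(infos G i) = {x. active G i x}
           \<and> (\<forall>C \<in> infos G i. \<forall>x \<in> C. \<forall>y \<in> C. acts G i x = acts G i y)"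
  using assms unfolding finite_game_def by (elim conjE) assumption

lemma fg_P6: assumes "finite_game G" shows "\<forall>i. \<forall>C \<in> infos G i. \<forall>x \<in> C. \<forall>y \<in> C. experience G i x = experience G i y"
  using assms unfolding finite_game_def by (elim conjE) assumption

lemma fg_P7: assumes "finite_game G" shows "\<forall>i. (\<forall>z \<in> terminal G. \<forall>z' \<in> terminal G. pref G i z z' \<or> pref G i z' z)
           \<and> (\<forall>z1 \<in> terminal G. \<forall>z2 \<in> terminal G. \<forall>z3 \<in> terminal G.
                 pref G i z1 z2 \<longrightarrow> pref G i z2 z3 \<longrightarrow> pref G i z1 z3)"
  using assms unfolding finite_game_def by (elim conjE) assumption

lemma fg_hist_prefix: assumes "finite_game G" "x @ y \<in> hist G" shows "x \<in> hist G"
  using fg_P3[OF assms(1), rule_format, OF assms(2)] .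

lemma fg_take_hist: "finite_game G \<Longrightarrow> x \<in> hist G \<Longrightarrow> take k x \<in> hist G"
  by (metis append_take_drop_id fg_hist_prefix)

lemma fg_finite_hist: "finite_game G \<Longrightarrow> finite (hist G)"
  by (rule fg_P1)

lemma fg_infos_ne: assumes "finite_game G" "C \<in> infos G i" shows "C \<noteq> {}"
  using fg_P5[OF assms(1), THEN spec[of _ i], THEN conjunct1] assms(2) by blast

lemma fg_infos_disj: assumes "finite_game G" "C \<in> infos G i" "D \<in> infos G i" "x \<in> C" "x \<in> D" shows "C = D"
  using fg_P5[OF assms(1), THEN spec[of _ i], THEN conjunct2, THEN conjunct1] assms(2-) by blast

lemma fg_infos_union: assumes "finite_game G" shows "\<Union>(infos G i) = {x. active G i x}"
  using fg_P5[OF assms(1), THEN spec[of _ i], THEN conjunct2, THEN conjunct2, THEN conjunct1] .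

lemma fg_infos_acts: assumes "finite_game G" "C \<in> infos G i" "x \<in> C" "y \<in> C" shows "acts G i x = acts G i y"
  using fg_P5[OF assms(1), THEN spec[of _ i], THEN conjunct2, THEN conjunct2, THEN conjunct2] assms(2-) by blast

lemma fg_recall: assumes "finite_game G" "C \<in> infos G i" "x \<in> C" "y \<in> C" shows "experience G i x = experience G i y"
  using fg_P6[OF assms(1), THEN spec[of _ i]] assms(2-) by blast

lemma fg_infos_active: "finite_game G \<Longrightarrow> C \<in> infos G i \<Longrightarrow> x \<in> C \<Longrightarrow> active G i x"
  using fg_infos_union by blast

lemma cellof_eq: "finite_game G \<Longrightarrow> C \<in> infos G i \<Longrightarrow> x \<in> C \<Longrightarrow> cellof G i x = C"
  unfolding cellof_def by (rule the_equality) (auto dest: fg_infos_disj)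

lemma cellof_in: "finite_game G \<Longrightarrow> active G i x \<Longrightarrow> cellof G i x \<in> infos G i \<and> x \<in> cellof G i x"
proof -
  assume fg: "finite_game G" and a: "active G i x"
  then obtain C where "C \<in> infos G i" "x \<in> C" using fg_infos_union[OF fg, of i] by blast
  thus ?thesis using cellof_eq[OF fg] by simp
qed

lemma exp_mem: "p \<in> set (experience G i z) \<longleftrightarrow>
   (\<exists>k<length z. active G i (take k z) \<and> p = (cellof G i (take k z), (z ! k) i))"
  unfolding experience_def by auto

lemma consistent_exp: "consistent G i \<sigma> x \<longleftrightarrow> (\<forall>p \<in> set (experience G i x). \<sigma> (fst p) = snd p)"
proof
  assume c: "consistent G i \<sigma> x"
  show "\<forall>p \<in> set (experience G i x). \<sigma> (fst p) = snd p"
  proof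
    fix p assume "p \<in> set (experience G i x)"
    then obtain k where "k < length x" "active G i (take k x)" "p = (cellof G i (take k x), (x ! k) i)"
      unfolding exp_mem by blast
    thus "\<sigma> (fst p) = snd p" using c unfolding consistent_def by simp
  qed
next
  assume c: "\<forall>p \<in> set (experience G i x). \<sigma> (fst p) = snd p"
  show "consistent G i \<sigma> x" unfolding consistent_def
  proof (intro allI impI)
    fix k assume "k < length x" "active G i (take k x)"
    hence "(cellof G i (take k x), (x ! k) i) \<in> set (experience G i x)" unfolding exp_mem by blast
    thus "(x ! k) i = \<sigma> (cellof G i (take k x))" using c by fastforce
  qed
qed

lemma consistent_take: "consistent G i \<sigma> x \<Longrightarrow> consistent G i \<sigma> (take k x)"
  unfolding consistent_def by (auto simp: min_def)

lemma recall_consistent: "finite_game G \<Longrightarrow> C \<in> infos G i \<Longrightarrow> x \<in> C \<Longrightarrow> y \<in> C \<Longrightarrow>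
   consistent G i \<sigma> x \<longleftrightarrow> consistent G i \<sigma> y"
  unfolding consistent_exp using fg_recall by metis

lemma cconsistent_take: assumes "cconsistent G i c x" shows "cconsistent G i c (take k x)"
proof -
  obtain \<sigma> where "\<sigma> \<in> c" "consistent G i \<sigma> x" using assms unfolding cconsistent_def by blast
  thus ?thesis unfolding cconsistent_def using consistent_take[of G i \<sigma> x k] by blast
qed

lemma beq_sym: "(\<sigma>, \<tau>) \<in> beq G i \<Longrightarrow> (\<tau>, \<sigma>) \<in> beq G i"
  unfolding beq_def by auto

lemma beq_consistent: assumes fg: "finite_game G" and b: "(\<sigma>, \<tau>) \<in> beq G i"
  and c: "consistent G i \<sigma> z" shows "consistent G i \<tau> z"
  unfolding consistent_exp
proof
  fix p assume pz: "p \<in> set (experience G i z)"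
  then obtain k where k: "k < length z" "active G i (take k z)" "p = (cellof G i (take k z), (z ! k) i)"
    unfolding exp_mem by blast
  let ?C = "cellof G i (take k z)"
  have C: "?C \<in> infos G i" "take k z \<in> ?C" using cellof_in[OF fg k(2)] by auto
  have "consistent G i \<sigma> (take k z)" using consistent_take[OF c] .
  hence al: "allows G i \<sigma> ?C" unfolding allows_def using C by blast
  have "\<sigma> (fst p) = snd p" using c pz unfolding consistent_exp by blast
  hence "\<sigma> ?C = snd p" using k(3) by simp
  moreover have "\<sigma> ?C = \<tau> ?C" using b al C unfolding beq_def by blast
  ultimately show "\<tau> (fst p) = snd p" using k by simp
qed

lemma cls_consistent: assumes fg: "finite_game G" and s: "\<sigma> \<in> stdstrats G i"
  shows "cconsistent G i (beq G i `` {\<sigma>}) z \<longleftrightarrow> consistent G i \<sigma> z"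
proof
  assume "cconsistent G i (beq G i `` {\<sigma>}) z"
  then obtain \<tau> where t: "(\<sigma>, \<tau>) \<in> beq G i" "consistent G i \<tau> z" unfolding cconsistent_def by blast
  show "consistent G i \<sigma> z" by (rule beq_consistent[OF fg beq_sym[OF t(1)] t(2)])
next
  assume "consistent G i \<sigma> z"
  moreover have "(\<sigma>, \<sigma>) \<in> beq G i" using s unfolding beq_def by auto
  ultimately show "cconsistent G i (beq G i `` {\<sigma>}) z" unfolding cconsistent_def by blast
qed

lemma strats_rep: assumes fg: "finite_game G" and c: "c \<in> strats G i"
  shows "\<exists>\<sigma>. \<sigma> \<in> stdstrats G i \<and> \<sigma> \<in> c \<and> c = beq G i `` {\<sigma>} \<and> (\<forall>z. cconsistent G i c z \<longleftrightarrow> consistent G i \<sigma> z)"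
proof -
  obtain \<sigma> where s: "\<sigma> \<in> stdstrats G i" "c = beq G i `` {\<sigma>}"
    using c unfolding strats_def by (auto elim: quotientE)
  have "\<sigma> \<in> c" using s unfolding beq_def by auto
  moreover have "\<forall>z. cconsistent G i c z \<longleftrightarrow> consistent G i \<sigma> z"
    using cls_consistent[OF fg s(1)] s(2) by simp
  ultimately show ?thesis using s by blast
qed


lemma acts_finite: assumes fg: "finite_game G" shows "finite (acts G j v)"
proof -
  have "acts G j v = (\<lambda>p. p j) ` ((\<lambda>p. v @ [p]) -` hist G)" unfolding acts_def by auto
  moreover have "finite ((\<lambda>p. v @ [p]) -` hist G)"
    by (rule finite_vimageI) (use fg_finite_hist[OF fg] in \<open>auto simp: inj_on_def\<close>)
  ultimately show ?thesis by simp
qed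

lemma terminal_hist: "z \<in> terminal G \<Longrightarrow> z \<in> hist G" unfolding terminal_def by auto

lemma pref_rep: assumes fg: "finite_game G" and x: "x \<in> hist G" and z: "z \<in> terminal G"
  and cx: "\<forall>j. consistent G j (\<sigma>s j) x" and cz: "\<forall>j. consistent G j (\<sigma>s j) z"
  shows "take (length x) z = x"
proof -
  have zh: "z \<in> hist G" using z terminal_hist by blast
  have "k \<le> length x \<longrightarrow> k \<le> length z \<and> take k z = take k x" for k
  proof (induction k)
    case 0 then show ?case by simp
  next
    case (Suc k)
    show ?case
    proof
      assume sk: "Suc k \<le> length x"
      with Suc have IH: "k \<le> length z" "take k z = take k x" by auto
      have tx: "take k x @ [x ! k] \<in> hist G"
        using fg_take_hist[OF fg x, of "Suc k"] sk by (simp add: take_Suc_conv_app_nth)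
      have kz: "k < length z"
      proof (rule ccontr)
        assume "\<not> k < length z"
        hence "z = take k x" using IH by simp
        thus False using tx z unfolding terminal_def by auto
      qed
      let ?v = "take k x"
      have tz: "?v @ [z ! k] \<in> hist G"
        using fg_take_hist[OF fg zh, of "Suc k"] kz IH by (simp add: take_Suc_conv_app_nth)
      have vh: "?v \<in> hist G" using fg_take_hist[OF fg x] .
      have vnt: "?v \<notin> terminal G" using tx unfolding terminal_def by auto
      have eq: "z ! k = x ! k"
      proof
        fix j
        show "(z ! k) j = (x ! k) j"
        proof (cases "active G j ?v")
          case True
          have "(x ! k) j = \<sigma>s j (cellof G j ?v)" using cx True sk unfolding consistent_def by auto
          moreover have "(z ! k) j = \<sigma>s j (cellof G j ?v)" using cz True kz IH unfolding consistent_def by auto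
          ultimately show ?thesis by simp
        next
          case False
          hence c: "card (acts G j ?v) \<le> Suc 0" using vh vnt unfolding active_def by auto
          have "(z ! k) j \<in> acts G j ?v" "(x ! k) j \<in> acts G j ?v" using tx tz unfolding acts_def by auto
          thus ?thesis using c acts_finite[OF fg] card_le_Suc0_iff_eq by blast
        qed
      qed
      show "Suc k \<le> length z \<and> take (Suc k) z = take (Suc k) x"
        using kz IH eq sk by (simp add: take_Suc_conv_app_nth)
    qed
  qed
  thus ?thesis by simp
qed

lemma pref_cls: assumes fg: "finite_game G" and q: "\<forall>j. q j \<in> strats G j"
  and x: "x \<in> hist G" and z: "z \<in> terminal G"
  and cx: "\<forall>j. cconsistent G j (q j) x" and cz: "\<forall>j. cconsistent G j (q j) z"
  shows "take (length x) z = x"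
proof -
  have "\<forall>j. \<exists>\<sigma>. \<forall>y. cconsistent G j (q j) y \<longleftrightarrow> consistent G j \<sigma> y"
    using strats_rep[OF fg] q by blast
  then obtain \<sigma>s where s: "\<forall>j y. cconsistent G j (q j) y \<longleftrightarrow> consistent G j (\<sigma>s j) y" by metis
  show ?thesis by (rule pref_rep[OF fg x z, of \<sigma>s]) (use s cx cz in auto)
qed

lemma exp_len: "length (experience G i x) = card {m. m < length x \<and> active G i (take m x)}"
  unfolding experience_def by (simp add: length_filter_conv_card cong: conj_cong)

lemma exp_len_take: assumes "k \<le> length x"
  shows "length (experience G i (take k x)) = card {m. m < k \<and> active G i (take m x)}"
proof -
  have "{m. m < length (take k x) \<and> active G i (take m (take k x))} = {m. m < k \<and> active G i (take m x)}"
    using assms by (auto simp: min_def)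
  thus ?thesis unfolding exp_len by simp
qed

lemma cell_unique_idx: assumes fg: "finite_game G" and k: "k < length x" "k' < length x"
  and a: "active G i (take k x)" "active G i (take k' x)"
  and c: "cellof G i (take k x) = cellof G i (take k' x)"
  shows "k = k'"
proof (rule ccontr)
  have gen: "False" if "k1 < k2" "k2 < length x" "active G i (take k1 x)" "active G i (take k2 x)"
     "cellof G i (take k1 x) = cellof G i (take k2 x)" for k1 k2
  proof -
    let ?C = "cellof G i (take k2 x)"
    have C: "?C \<in> infos G i" "take k2 x \<in> ?C" using cellof_in[OF fg that(4)] by auto
    have "take k1 x \<in> ?C" using cellof_in[OF fg that(3)] that(5) by auto
    hence "experience G i (take k1 x) = experience G i (take k2 x)" using fg_recall[OF fg C(1)] C(2) by blast
    hence c1: "card {m. m < k1 \<and> active G i (take m x)} = card {m. m < k2 \<and> active G i (take m x)}"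
      using that(1,2) exp_len_take[of k1 x G i] exp_len_take[of k2 x G i] by simp
    have ps: "{m. m < k1 \<and> active G i (take m x)} \<subset> {m. m < k2 \<and> active G i (take m x)}"
      using that by auto
    have f: "finite {m. m < k2 \<and> active G i (take m x)}" by simp
    show False using psubset_card_mono[OF f ps] c1 by simp
  qed
  assume "k \<noteq> k'"
  then show False using gen k a c by (metis linorder_neqE_nat)
qed


lemma exists_consistent: assumes fg: "finite_game G" and x: "x \<in> hist G"
  shows "\<exists>\<sigma> \<in> stdstrats G j. consistent G j \<sigma> x"
proof -
  define P where "P C k \<longleftrightarrow> k < length x \<and> active G j (take k x) \<and> cellof G j (take k x) = C" for C k
  define \<sigma> where "\<sigma> C = (if \<exists>k. P C k then (x ! (SOME k. P C k)) j
      else if C \<in> infos G j then (SOME a. a \<in> acts G j (SOME y. y \<in> C)) else undefined)" for C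
  have st: "\<sigma> \<in> stdstrats G j"
    unfolding stdstrats_def
  proof (intro CollectI conjI ballI allI impI)
    fix C y assume C: "C \<in> infos G j" and y: "y \<in> C"
    show "\<sigma> C \<in> acts G j y"
    proof (cases "\<exists>k. P C k")
      case True
      define k0 where "k0 = (SOME k. P C k)"
      have pk: "P C k0" using True someI_ex unfolding k0_def by metis
      have "take k0 x @ [x ! k0] \<in> hist G"
        using fg_take_hist[OF fg x, of "Suc k0"] pk unfolding P_def by (simp add: take_Suc_conv_app_nth)
      hence "(x ! k0) j \<in> acts G j (take k0 x)" unfolding acts_def by auto
      moreover have "take k0 x \<in> C" using cellof_in[OF fg, of j "take k0 x"] pk unfolding P_def by auto
      ultimately show ?thesis using fg_infos_acts[OF fg C _ y] True unfolding \<sigma>_def k0_def by auto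
    next
      case False
      define y0 where "y0 = (SOME y. y \<in> C)"
      have y0: "y0 \<in> C" using y someI unfolding y0_def by metis
      have "card (acts G j y0) \<ge> 2" using fg_infos_active[OF fg C y0] unfolding active_def by auto
      hence "acts G j y0 \<noteq> {}" by auto
      hence "(SOME a. a \<in> acts G j y0) \<in> acts G j y0" by (simp add: some_in_eq)
      thus ?thesis using False C fg_infos_acts[OF fg C y0 y] unfolding \<sigma>_def y0_def by auto
    qed
  next
    fix C assume C: "C \<notin> infos G j"
    have "\<not> (\<exists>k. P C k)" using C cellof_in[OF fg] unfolding P_def by blast
    thus "\<sigma> C = undefined" using C unfolding \<sigma>_def by auto
  qed
  have "consistent G j \<sigma> x"
    unfolding consistent_def
  proof (intro allI impI)
    fix k assume k: "k < length x" "active G j (take k x)"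
    let ?C = "cellof G j (take k x)"
    have pk: "P ?C k" using k unfolding P_def by auto
    define k0 where "k0 = (SOME k. P ?C k)"
    have pk0: "P ?C k0" using pk someI unfolding k0_def by metis
    have "k0 = k" using cell_unique_idx[OF fg, of k0 x k j] pk0 k unfolding P_def by auto
    thus "(x ! k) j = \<sigma> ?C" using pk unfolding \<sigma>_def k0_def by auto
  qed
  thus ?thesis using st by blast
qed

lemma exists_cls: assumes fg: "finite_game G" and x: "x \<in> hist G"
  shows "\<exists>c \<in> strats G j. cconsistent G j c x"
proof -
  obtain \<sigma> where s: "\<sigma> \<in> stdstrats G j" "consistent G j \<sigma> x" using exists_consistent[OF fg x] by blast
  have "beq G j `` {\<sigma>} \<in> strats G j" unfolding strats_def by (rule quotientI[OF s(1)])
  moreover have "\<sigma> \<in> beq G j `` {\<sigma>}" using s unfolding beq_def by auto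
  ultimately show ?thesis using s unfolding cconsistent_def by blast
qed

lemma strats_ne: "finite_game G \<Longrightarrow> strats G j \<noteq> {}"
  using exists_cls[of G "[]" j] fg_P2 by blast

lemma infos_finite: assumes fg: "finite_game G" shows "finite (infos G i)"
proof -
  have "infos G i \<subseteq> Pow (hist G)" using fg_infos_union[OF fg, of i] unfolding active_def by auto
  thus ?thesis using fg_finite_hist[OF fg] by (meson finite_Pow_iff finite_subset)
qed

lemma stdstrats_finite: assumes fg: "finite_game G" shows "finite (stdstrats G i)"
proof -
  let ?B = "\<Union>y\<in>hist G. acts G i y"
  have "stdstrats G i \<subseteq> {f. \<forall>x. (x \<in> infos G i \<longrightarrow> f x \<in> ?B) \<and> (x \<notin> infos G i \<longrightarrow> f x = undefined)}"
  proof (clarsimp simp: stdstrats_def)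
    fix \<sigma> C assume h: "\<forall>C\<in>infos G i. \<forall>x\<in>C. \<sigma> C \<in> acts G i x" and C: "C \<in> infos G i"
    obtain y where "y \<in> C" using fg_infos_ne[OF fg C] by blast
    moreover have "y \<in> hist G" using fg_infos_active[OF fg C \<open>y \<in> C\<close>] unfolding active_def by auto
    ultimately show "\<exists>y\<in>hist G. \<sigma> C \<in> acts G i y" using h C by blast
  qed
  moreover have "finite ?B" using fg_finite_hist[OF fg] acts_finite[OF fg] by blast
  ultimately show ?thesis
    using finite_subset[OF _ finite_set_of_finite_funs[OF infos_finite[OF fg, of i], of ?B undefined]] by blast
qed

lemma strats_finite: "finite_game G \<Longrightarrow> finite (strats G i)"
  unfolding strats_def by (rule finite_quotient) (auto simp: stdstrats_finite beq_def)

lemma others_finite: fixes R :: "'i::finite \<Rightarrow> ('i, 'a) strat set"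
  assumes "\<forall>j. finite (R j)" shows "finite (others i R)"
proof -
  have "others i R \<subseteq> {f. \<forall>x. (x \<in> - {i} \<longrightarrow> f x \<in> (\<Union>j. R j)) \<and> (x \<notin> - {i} \<longrightarrow> f x = undefined)}"
    unfolding others_def by auto
  moreover have "finite (\<Union>j. R j)" by (rule finite_UN_I) (simp_all add: assms)
  ultimately show ?thesis using finite_set_of_finite_funs[of "- {i}" "\<Union>j. R j" undefined]
    finite_subset by auto
qed

lemma others_at_ne: assumes fg: "finite_game G" and h: "h \<in> infos G i"
  shows "others_at G i h \<noteq> {}"
proof -
  obtain x where x: "x \<in> h" using fg_infos_ne[OF fg h] by blast
  have xh: "x \<in> hist G" using fg_infos_active[OF fg h x] unfolding active_def by auto
  have "\<forall>j. \<exists>c. c \<in> strats G j \<and> cconsistent G j c x" using exists_cls[OF fg xh] by blast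
  then obtain cs where cs: "\<forall>j. cs j \<in> strats G j \<and> cconsistent G j (cs j) x" by metis
  let ?t = "(cs(i := undefined))"
  have "?t \<in> others_at G i h" unfolding others_at_def others_def using cs x by auto
  thus ?thesis by blast
qed


lemma lemP: assumes fg: "finite_game G" and h: "h \<in> infos G i" and C: "C \<in> infos G i"
  and x: "x \<in> C" and m: "m \<le> length x" "take m x \<in> h"
  and k: "k < length z" "active G i (take k z)" "C = cellof G i (take k z)"
  shows "\<exists>k' \<le> k. take k' z \<in> h"
proof -
  let ?y = "take k z"
  have y: "?y \<in> C" using cellof_in[OF fg k(2)] k(3) by auto
  show ?thesis
  proof (cases "m = length x")
    case True
    hence "x \<in> h" using m by simp
    hence "C = h" using fg_infos_disj[OF fg C h x] by simp
    thus ?thesis using y by auto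
  next
    case False
    hence ml: "m < length x" using m by simp
    have "active G i (take m x)" using fg_infos_active[OF fg h m(2)] .
    moreover have "cellof G i (take m x) = h" using cellof_eq[OF fg h m(2)] .
    ultimately have "(h, (x ! m) i) \<in> set (experience G i x)" unfolding exp_mem using ml by metis
    hence "(h, (x ! m) i) \<in> set (experience G i ?y)" using fg_recall[OF fg C x y] by simp
    then obtain k' where k': "k' < length ?y" "active G i (take k' ?y)" "h = cellof G i (take k' ?y)"
      unfolding exp_mem by auto
    have "take k' ?y \<in> h" using cellof_in[OF fg k'(2)] k'(3) by auto
    moreover have "take k' ?y = take k' z"
    proof -
      have "k' < k" using k'(1) by simp
      thus ?thesis by (simp add: take_take min_absorb1)
    qed
    ultimately show ?thesis using k' by (intro exI[of _ k']) auto
  qed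
qed

definition after :: "('i, 'a) game \<Rightarrow> 'i \<Rightarrow> ('i, 'a) infoset \<Rightarrow> ('i, 'a) infoset set" where
  "after G i h = {C \<in> infos G i. \<exists>y\<in>C. \<exists>m \<le> length y. take m y \<in> h}"

lemma prefix_cells: assumes fg: "finite_game G" and h: "h \<in> infos G i" and x: "x \<in> h"
  and cx: "consistent G i \<sigma> x" and pz: "take (length x) z = x"
  and p: "(C, a) \<in> set (experience G i z)" and nF: "C \<notin> after G i h"
  shows "\<sigma> C = a"
proof -
  obtain k where k: "k < length z" "active G i (take k z)" "C = cellof G i (take k z)" "a = (z ! k) i"
    using p unfolding exp_mem by auto
  have Ck: "C \<in> infos G i" "take k z \<in> C" using cellof_in[OF fg k(2)] k(3) by auto
  have lxz: "length x \<le> length z"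
  proof -
    have "length (take (length x) z) = length x" using pz by simp
    thus ?thesis by simp
  qed
  have kx: "k < length x"
  proof (rule ccontr)
    assume "\<not> k < length x"
    hence "take (length x) (take k z) = x" using pz by (simp add: min_def)
    hence "C \<in> after G i h" unfolding after_def using Ck x \<open>\<not> k < length x\<close> lxz
      by (intro CollectI conjI bexI[of _ "take k z"] exI[of _ "length x"]) auto
    thus False using nF by simp
  qed
  have "take k x = take k z" using pz kx by (metis min.strict_order_iff take_take)
  moreover have "x ! k = z ! k" using pz kx by (metis nth_take)
  ultimately have "(C, a) \<in> set (experience G i x)" unfolding exp_mem using kx k by metis
  thus ?thesis using cx unfolding consistent_exp by fastforce
qed

lemma splice: assumes fg: "finite_game G" and h: "h \<in> infos G i"
  and c: "c \<in> strats_at G i h" and c': "c' \<in> strats_at G i h"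
  shows "\<exists>c''\<in>strats G i. \<forall>t \<in> others i (strats G).
      outcome G (t(i := c'')) = (if t \<in> others_at G i h then outcome G (t(i := c')) else outcome G (t(i := c)))"
proof -
  obtain \<sigma> where s: "\<sigma> \<in> stdstrats G i" "\<forall>z. cconsistent G i c z \<longleftrightarrow> consistent G i \<sigma> z"
    using strats_rep[OF fg] c unfolding strats_at_def by blast
  obtain \<sigma>' where s': "\<sigma>' \<in> stdstrats G i" "\<forall>z. cconsistent G i c' z \<longleftrightarrow> consistent G i \<sigma>' z"
    using strats_rep[OF fg] c' unfolding strats_at_def by blast
  have hs: "\<forall>x\<in>h. consistent G i \<sigma> x" using c s recall_consistent[OF fg h] unfolding strats_at_def by blast
  have hs': "\<forall>x\<in>h. consistent G i \<sigma>' x" using c' s' recall_consistent[OF fg h] unfolding strats_at_def by blast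
  define F where "F = after G i h"
  define \<sigma>'' where "\<sigma>'' C = (if C \<in> F then \<sigma>' C else \<sigma> C)" for C
  have st: "\<sigma>'' \<in> stdstrats G i" using s s' unfolding stdstrats_def \<sigma>''_def by auto
  define c'' where "c'' = beq G i `` {\<sigma>''}"
  have c''s: "c'' \<in> strats G i" unfolding c''_def strats_def by (rule quotientI[OF st])
  have cc'': "\<forall>z. cconsistent G i c'' z \<longleftrightarrow> consistent G i \<sigma>'' z"
    unfolding c''_def using cls_consistent[OF fg st] by blast
  have hs'': "\<forall>x\<in>h. consistent G i \<sigma>'' x"
    using hs hs' unfolding consistent_def \<sigma>''_def by auto
  have "\<forall>t \<in> others i (strats G).
      outcome G (t(i := c'')) = (if t \<in> others_at G i h then outcome G (t(i := c')) else outcome G (t(i := c)))"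
  proof
    fix t assume t: "t \<in> others i (strats G)"
    have tj: "\<forall>j. j \<noteq> i \<longrightarrow> t j \<in> strats G j" using t unfolding others_def by auto
    show "outcome G (t(i := c'')) = (if t \<in> others_at G i h then outcome G (t(i := c')) else outcome G (t(i := c)))"
    proof (cases "t \<in> others_at G i h")
      case True
      then obtain x where x: "x \<in> h" "\<forall>j. j \<noteq> i \<longrightarrow> cconsistent G j (t j) x"
        unfolding others_at_def by blast
      have xh: "x \<in> hist G" using fg_infos_active[OF fg h x(1)] unfolding active_def by auto
      have key: "consistent G i \<sigma>'' z \<longleftrightarrow> consistent G i \<sigma>' z" if pz: "take (length x) z = x" for z
      proof -
        have "\<forall>p \<in> set (experience G i z). fst p \<notin> F \<longrightarrow> \<sigma> (fst p) = snd p \<and> \<sigma>' (fst p) = snd p"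
          using prefix_cells[OF fg h x(1) _ pz] hs hs' x(1) unfolding F_def by fastforce
        thus ?thesis unfolding consistent_exp \<sigma>''_def by auto
      qed
      have "(z \<in> terminal G \<and> (\<forall>j. cconsistent G j ((t(i := c'')) j) z)) \<longleftrightarrow>
            (z \<in> terminal G \<and> (\<forall>j. cconsistent G j ((t(i := c')) j) z))" for z
      proof
        assume a: "z \<in> terminal G \<and> (\<forall>j. cconsistent G j ((t(i := c'')) j) z)"
        have "take (length x) z = x"
          by (rule pref_cls[OF fg _ xh, of "t(i := c'')"]) (use a tj c''s x cc'' hs'' in auto)
        thus "z \<in> terminal G \<and> (\<forall>j. cconsistent G j ((t(i := c')) j) z)"
          using a key cc'' s' by (auto split: if_splits)
      next
        assume a: "z \<in> terminal G \<and> (\<forall>j. cconsistent G j ((t(i := c')) j) z)"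
        have c's: "c' \<in> strats G i" using c' unfolding strats_at_def by auto
        have "take (length x) z = x"
          by (rule pref_cls[OF fg _ xh, of "t(i := c')"]) (use a tj c's x s' hs' in auto)
        thus "z \<in> terminal G \<and> (\<forall>j. cconsistent G j ((t(i := c'')) j) z)"
          using a key cc'' s' by (auto split: if_splits)
      qed
      thus ?thesis using True unfolding outcome_def by simp
    next
      case False
      have key: "consistent G i \<sigma>'' z \<longleftrightarrow> consistent G i \<sigma> z"
        if tz: "\<forall>j. j \<noteq> i \<longrightarrow> cconsistent G j (t j) z" for z
      proof -
        have "fst p \<notin> F" if p: "p \<in> set (experience G i z)" for p
        proof
          assume pF: "fst p \<in> F"
          obtain k where k: "k < length z" "active G i (take k z)" "fst p = cellof G i (take k z)"
            using p unfolding exp_mem by auto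
          obtain y m where y: "fst p \<in> infos G i" "y \<in> fst p" "m \<le> length y" "take m y \<in> h"
            using pF unfolding F_def after_def by auto
          obtain k' where "take k' z \<in> h" using lemP[OF fg h y k] by blast
          moreover have "\<forall>j. j \<noteq> i \<longrightarrow> cconsistent G j (t j) (take k' z)"
            using tz by (simp add: cconsistent_take)
          ultimately have "t \<in> others_at G i h" using t unfolding others_at_def by blast
          thus False using False by simp
        qed
        thus ?thesis unfolding consistent_exp \<sigma>''_def by auto
      qed
      have "(z \<in> terminal G \<and> (\<forall>j. cconsistent G j ((t(i := c'')) j) z)) \<longleftrightarrow>
            (z \<in> terminal G \<and> (\<forall>j. cconsistent G j ((t(i := c)) j) z))" for z
        using key[of z] cc'' s by (auto split: if_splits)
      thus ?thesis using False unfolding outcome_def by simp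
    qed
  qed
  thus ?thesis using c''s by blast
qed


lemma util_exists: assumes fg: "finite_game G" shows "\<exists>u. u \<in> utils G i"
proof -
  let ?T = "terminal G"
  have fT: "finite ?T" using fg_finite_hist[OF fg] terminal_hist by (meson finite_subset subsetI)
  have tot: "\<forall>z\<in>?T. \<forall>z'\<in>?T. pref G i z z' \<or> pref G i z' z"
   and tr: "\<forall>z1\<in>?T. \<forall>z2\<in>?T. \<forall>z3\<in>?T. pref G i z1 z2 \<longrightarrow> pref G i z2 z3 \<longrightarrow> pref G i z1 z3"
    using fg_P7[OF fg] by blast+
  define u where "u z = real (card {w \<in> ?T. pref G i z w})" for z
  have "\<forall>z\<in>?T. \<forall>z'\<in>?T. u z \<ge> u z' \<longleftrightarrow> pref G i z z'"
  proof (intro ballI iffI)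
    fix z z' assume z: "z \<in> ?T" and z': "z' \<in> ?T" and p: "pref G i z z'"
    have "{w \<in> ?T. pref G i z' w} \<subseteq> {w \<in> ?T. pref G i z w}" using tr z z' p by blast
    thus "u z \<ge> u z'" unfolding u_def using fT by (simp add: card_mono)
  next
    fix z z' assume z: "z \<in> ?T" and z': "z' \<in> ?T" and g: "u z \<ge> u z'"
    show "pref G i z z'"
    proof (rule ccontr)
      assume np: "\<not> pref G i z z'"
      hence p: "pref G i z' z" using tot z z' by blast
      have "{w \<in> ?T. pref G i z w} \<subset> {w \<in> ?T. pref G i z' w}"
      proof
        show "{w \<in> ?T. pref G i z w} \<subseteq> {w \<in> ?T. pref G i z' w}" using tr z z' p by blast
        have "pref G i z' z'" using tot z' by blast
        thus "{w \<in> ?T. pref G i z w} \<noteq> {w \<in> ?T. pref G i z' w}" using np z' by blast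
      qed
      hence "u z < u z'" unfolding u_def using fT by (simp add: psubset_card_mono)
      thus False using g by simp
    qed
  qed
  thus ?thesis unfolding utils_def by blast
qed

definition Dlev :: "nat \<Rightarrow> (nat \<Rightarrow> 'x set) \<Rightarrow> 'x set \<Rightarrow> nat" where
  "Dlev n Ob E = Max {m. m < n \<and> E \<inter> Ob m \<noteq> {}}"

definition mu :: "nat \<Rightarrow> (nat \<Rightarrow> 'x set) \<Rightarrow> 'x set \<Rightarrow> 'x \<Rightarrow> real" where
  "mu n Ob E t = (if t \<in> E \<inter> Ob (Dlev n Ob E) then 1 / real (card (E \<inter> Ob (Dlev n Ob E))) else 0)"

lemma Dlev_props: assumes "0 < n" "E \<inter> Ob 0 \<noteq> {}"
  shows "Dlev n Ob E < n \<and> E \<inter> Ob (Dlev n Ob E) \<noteq> {} \<and> (\<forall>m<n. E \<inter> Ob m \<noteq> {} \<longrightarrow> m \<le> Dlev n Ob E)"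
proof -
  let ?M = "{m. m < n \<and> E \<inter> Ob m \<noteq> {}}"
  have f: "finite ?M" by (rule finite_subset[of _ "{..<n}"]) auto
  have ne: "?M \<noteq> {}" using assms by auto
  have "Dlev n Ob E \<in> ?M" unfolding Dlev_def using Max_in[OF f ne] .
  moreover have "\<forall>m<n. E \<inter> Ob m \<noteq> {} \<longrightarrow> m \<le> Dlev n Ob E" unfolding Dlev_def using Max_ge[OF f] by auto
  ultimately show ?thesis by auto
qed

lemma cprob_mu: assumes "finite A"
  shows "cprob (mu n Ob) A E = real (card (A \<inter> (E \<inter> Ob (Dlev n Ob E)))) / real (card (E \<inter> Ob (Dlev n Ob E)))"
proof -
  let ?S = "E \<inter> Ob (Dlev n Ob E)"
  have "cprob (mu n Ob) A E = (\<Sum>t\<in>A. if t \<in> ?S then 1 / real (card ?S) else 0)"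
    unfolding cprob_def mu_def by simp
  also have "\<dots> = (\<Sum>t\<in>A \<inter> ?S. 1 / real (card ?S))" by (rule sum.inter_restrict[OF assms, symmetric])
  also have "\<dots> = real (card (A \<inter> ?S)) / real (card ?S)" by simp
  finally show ?thesis .
qed

lemma sum_mu: assumes "finite A" "E \<inter> Ob (Dlev n Ob E) \<subseteq> A"
  shows "(\<Sum>t\<in>A. f t * mu n Ob E t) = (\<Sum>t\<in>E \<inter> Ob (Dlev n Ob E). f t) / real (card (E \<inter> Ob (Dlev n Ob E)))"
proof -
  let ?S = "E \<inter> Ob (Dlev n Ob E)"
  have "(\<Sum>t\<in>A. f t * mu n Ob E t) = (\<Sum>t\<in>A. if t \<in> ?S then f t / real (card ?S) else 0)"
    unfolding mu_def by (rule sum.cong) auto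
  also have "\<dots> = (\<Sum>t\<in>A \<inter> ?S. f t / real (card ?S))" by (rule sum.inter_restrict[OF assms(1), symmetric])
  also have "A \<inter> ?S = ?S" using assms(2) by blast
  finally show ?thesis by (simp add: sum_divide_distrib)
qed

lemma argmax_ex: assumes "finite X" "X \<noteq> {}" shows "\<exists>s\<in>X. \<forall>s'\<in>X. (f s' :: real) \<le> f s"
proof -
  have "Max (f ` X) \<in> f ` X" using assms by (intro Max_in) auto
  then obtain s where s: "s \<in> X" "f s = Max (f ` X)" by auto
  have "\<forall>s'\<in>X. f s' \<le> f s"
  proof
    fix s' assume "s' \<in> X"
    hence "f s' \<le> Max (f ` X)" using assms(1) by (intro Max_ge) auto
    thus "f s' \<le> f s" using s by simp
  qed
  thus ?thesis using s by blast
qed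

lemma osr_Suc: "osr G (Suc m) = osr_step G (osr G m)" unfolding osr_def by simp

lemma osr_sub: "osr G (Suc m) j \<subseteq> osr G m j" unfolding osr_Suc osr_step_def by auto

lemma osr_mono: "m \<le> m' \<Longrightarrow> osr G m' j \<subseteq> osr G m j"
proof (induction m' rule: dec_induct)
  case (step k) thus ?case using osr_sub[of G k j] by blast
qed simp

lemma osr_strats: "osr G m j \<subseteq> strats G j"
  using osr_mono[of 0 m G j] by (simp add: osr_def)

lemma others_mono: "(\<And>j. A j \<subseteq> B j) \<Longrightarrow> others i A \<subseteq> others i B"
  unfolding others_def by blast


lemma main_step: assumes fg: "finite_game G" shows "\<exists>s. s \<in> osr G n i"
proof (cases "n = 0")
  case True thus ?thesis using strats_ne[OF fg] by (auto simp: osr_def)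
next
  case False
  hence n0: "0 < n" by simp
  obtain u where u: "u \<in> utils G i" using util_exists[OF fg] by blast
  define Ob where "Ob m = others i (osr G m)" for m
  have O0: "Ob 0 = others i (strats G)" unfolding Ob_def osr_def by simp
  have fO: "finite (Ob m)" for m unfolding Ob_def
    by (rule others_finite) (meson finite_subset osr_strats strats_finite[OF fg])
  have Omono: "m \<le> m' \<Longrightarrow> Ob m' \<subseteq> Ob m" for m m' unfolding Ob_def by (rule others_mono) (rule osr_mono)
  have Osub: "Ob m \<subseteq> Ob 0" for m using Omono by blast
  define U where "U m s = (\<Sum>t\<in>Ob m. u (outcome G (t(i := s))))" for m s
  define B where "B = rec_nat (strats G i) (\<lambda>j X. {s\<in>X. \<forall>s'\<in>X. U (n - Suc j) s' \<le> U (n - Suc j) s})"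
  have B0: "B 0 = strats G i" unfolding B_def by simp
  have BS: "B (Suc j) = {s\<in>B j. \<forall>s'\<in>B j. U (n - Suc j) s' \<le> U (n - Suc j) s}" for j unfolding B_def by simp
  have Bne: "B j \<noteq> {} \<and> B j \<subseteq> strats G i" for j
  proof (induction j)
    case 0 thus ?case using B0 strats_ne[OF fg] by simp
  next
    case (Suc j)
    have "finite (B j)" by (rule finite_subset[OF _ strats_finite[OF fg]]) (use Suc in blast)
    then obtain s where "s \<in> B j" "\<forall>s'\<in>B j. U (n - Suc j) s' \<le> U (n - Suc j) s"
      using argmax_ex[of "B j" "U (n - Suc j)"] Suc by blast
    thus ?case using Suc unfolding BS by blast
  qed
  have Banti: "j \<le> j' \<Longrightarrow> B j' \<subseteq> B j" for j j'
    by (induction j' rule: dec_induct) (auto simp: BS)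
  obtain ss where ss: "ss \<in> B n" using Bne by blast
  have ssS: "ss \<in> strats G i" using ss Bne by blast
  have lex: "U d s'' \<le> U d ss" if s'': "s'' \<in> strats G i" and d: "d < n"
     and eqk: "\<forall>k. d < k \<and> k < n \<longrightarrow> U k s'' = U k ss" for s'' d
  proof -
    let ?jd = "n - Suc d"
    have "j \<le> ?jd \<longrightarrow> s'' \<in> B j" for j
    proof (induction j)
      case 0 thus ?case using s'' B0 by simp
    next
      case (Suc j)
      show ?case
      proof
        assume sj: "Suc j \<le> ?jd"
        hence sB: "s'' \<in> B j" using Suc by simp
        let ?l = "n - Suc j"
        have l: "d < ?l" "?l < n" using sj d by auto
        have "Suc j \<le> n" using sj by simp
        hence "ss \<in> B (Suc j)" using ss Banti[of "Suc j" n] by blast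
        hence "\<forall>s'\<in>B j. U ?l s' \<le> U ?l ss" unfolding BS by blast
        thus "s'' \<in> B (Suc j)" unfolding BS using sB eqk l by auto
      qed
    qed
    hence "s'' \<in> B ?jd" by simp
    moreover have "Suc ?jd \<le> n" using d by simp
    hence "ss \<in> B (Suc ?jd)" using ss Banti[of "Suc ?jd" n] by blast
    ultimately have "U (n - Suc ?jd) s'' \<le> U (n - Suc ?jd) ss" unfolding BS by blast
    moreover have "n - Suc ?jd = d" using d by simp
    ultimately show ?thesis by simp
  qed
  define \<mu> where "\<mu> = mu n Ob"
  define D where "D = Dlev n Ob"
  have Ecore: "E \<subseteq> Ob 0 \<and> E \<noteq> {} \<and> finite E" if E: "E \<in> cond_events G i" for E
  proof -
    obtain h where h: "h \<in> infos G i" "E = others_at G i h" using E unfolding cond_events_def by blast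
    have sub: "E \<subseteq> Ob 0" using h unfolding O0 others_at_def by auto
    have "finite E" by (rule finite_subset[OF sub fO])
    thus ?thesis using others_at_ne[OF fg h(1)] h sub by blast
  qed
  have Dp: "D E < n \<and> E \<inter> Ob (D E) \<noteq> {} \<and> (\<forall>m<n. E \<inter> Ob m \<noteq> {} \<longrightarrow> m \<le> D E)"
    if "E \<in> cond_events G i" for E
    unfolding D_def by (rule Dlev_props[OF n0]) (use Ecore[OF that] in auto)
  have cps: "is_cps G i \<mu>"
    unfolding is_cps_def
  proof (intro conjI ballI allI impI)
    fix E t assume "E \<in> cond_events G i"
    show "0 \<le> \<mu> E t" unfolding \<mu>_def mu_def by simp
  next
    fix E assume E: "E \<in> cond_events G i"
    have "E \<inter> Ob (D E) \<subseteq> Ob 0" using Ecore[OF E] by blast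
    moreover have "card (E \<inter> Ob (D E)) > 0" using Dp[OF E] Ecore[OF E] by (simp add: card_gt_0_iff)
    ultimately show "cprob \<mu> (others i (strats G)) E = 1" unfolding \<mu>_def cprob_mu[OF fO[of 0, unfolded O0]]
      by (simp add: O0[symmetric] Int_absorb1 D_def)
  next
    fix E assume E: "E \<in> cond_events G i"
    have "card (E \<inter> Ob (D E)) > 0" using Dp[OF E] Ecore[OF E] by (simp add: card_gt_0_iff)
    thus "cprob \<mu> E E = 1" unfolding \<mu>_def cprob_mu[OF conjunct2[OF conjunct2[OF Ecore[OF E]]]]
      by (simp add: D_def flip: Int_assoc)
  next
    fix E E' A assume E: "E \<in> cond_events G i" and E': "E' \<in> cond_events G i"
      and A: "A \<subseteq> E'" and EE: "E' \<subseteq> E"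
    have fA: "finite A" "finite E'" using A Ecore[OF E'] finite_subset by blast+
    show "cprob \<mu> A E = cprob \<mu> A E' * cprob \<mu> E' E"
    proof (cases "E' \<inter> Ob (D E) = {}")
      case True
      hence "A \<inter> (E \<inter> Ob (D E)) = {}" "E' \<inter> (E \<inter> Ob (D E)) = {}" using A by blast+
      thus ?thesis unfolding \<mu>_def cprob_mu[OF fA(1)] cprob_mu[OF fA(2)] by (simp add: D_def)
    next
      case False
      have "D E \<le> D E'" using Dp[OF E'] Dp[OF E] False by blast
      moreover have "D E' \<le> D E" using Dp[OF E'] Dp[OF E] EE by blast
      ultimately have eq: "D E' = D E" by simp
      have c1: "A \<inter> (E \<inter> Ob (D E)) = A \<inter> Ob (D E)" "A \<inter> (E' \<inter> Ob (D E)) = A \<inter> Ob (D E)"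
        "E' \<inter> (E \<inter> Ob (D E)) = E' \<inter> Ob (D E)" using A EE by blast+
      have nz: "real (card (E' \<inter> Ob (D E))) \<noteq> 0" using False fA(2) by simp
      show ?thesis unfolding \<mu>_def cprob_mu[OF fA(1)] cprob_mu[OF fA(2)]
        using eq c1 nz by (simp add: D_def)
    qed
  qed
  have ind: "m \<le> n \<longrightarrow> ss \<in> osr G m i" for m
  proof (induction m)
    case 0 thus ?case using ssS by (simp add: osr_def)
  next
    case (Suc m)
    show ?case
    proof
      assume mn: "Suc m \<le> n"
      hence IH: "ss \<in> osr G m i" using Suc by simp
      let ?R = "osr G m"
      have roa: "restr_others_at G i ?R h = Ob m \<inter> others_at G i h" for h
        unfolding restr_others_at_def Ob_def by simp
      have ce: "others_at G i h \<in> cond_events G i" if "h \<in> infos G i" for h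
        using that unfolding cond_events_def by blast
      have mu_in: "\<mu> \<in> cps_given G i ?R"
        unfolding cps_given_def
      proof (intro CollectI conjI cps ballI impI)
        fix h assume h: "h \<in> infos G i" and ne: "restr_at G i ?R h \<noteq> {} \<and> restr_others_at G i ?R h \<noteq> {}"
        let ?E = "others_at G i h"
        have mD: "m \<le> D ?E" using Dp[OF ce[OF h]] ne mn unfolding roa by (auto simp: Int_commute)
        have sub: "?E \<inter> Ob (D ?E) \<subseteq> Ob m \<inter> ?E" using Omono[OF mD] by blast
        have "card (?E \<inter> Ob (D ?E)) > 0" using Dp[OF ce[OF h]] Ecore[OF ce[OF h]] by (simp add: card_gt_0_iff)
        moreover have "Ob m \<inter> ?E \<inter> (?E \<inter> Ob (D ?E)) = ?E \<inter> Ob (D ?E)" using sub by blast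
        ultimately show "cprob \<mu> (restr_others_at G i ?R h) ?E = 1"
          unfolding roa \<mu>_def cprob_mu[OF finite_Int[OF disjI1[OF fO]]] by (simp add: D_def)
      qed
      have opt: "(\<Sum>t\<in>others i ?R. u (outcome G (t(i := ss))) * \<mu> (others_at G i h) t)
             \<ge> (\<Sum>t\<in>others i ?R. u (outcome G (t(i := s'))) * \<mu> (others_at G i h) t)"
        if h: "h \<in> infos_of G i ss" and ne: "restr_at G i ?R h \<noteq> {} \<and> restr_others_at G i ?R h \<noteq> {}"
          and s': "s' \<in> restr_at G i ?R h" for h s'
      proof (rule ccontr)
        let ?E = "others_at G i h"
        let ?d = "D ?E"
        let ?S = "?E \<inter> Ob ?d"
        have hI: "h \<in> infos G i" and ssh: "ss \<in> strats_at G i h" using h unfolding infos_of_def by auto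
        have s'h: "s' \<in> strats_at G i h" using s' unfolding restr_at_def by auto
        have dp: "?d < n" "\<forall>k<n. ?E \<inter> Ob k \<noteq> {} \<longrightarrow> k \<le> ?d" using Dp[OF ce[OF hI]] by auto
        have mD: "m \<le> ?d" using Dp[OF ce[OF hI]] ne mn unfolding roa by (auto simp: Int_commute)
        have Ssub: "?S \<subseteq> others i ?R" using Omono[OF mD] unfolding Ob_def by blast
        have cS: "real (card ?S) > 0" using Dp[OF ce[OF hI]] Ecore[OF ce[OF hI]] by (simp add: card_gt_0_iff)
        have fR: "finite (others i ?R)" using fO unfolding Ob_def .
        have e1: "(\<Sum>t\<in>others i ?R. u (outcome G (t(i := ss))) * \<mu> ?E t)
            = (\<Sum>t\<in>?S. u (outcome G (t(i := ss)))) / real (card ?S)"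
          unfolding \<mu>_def D_def
          by (rule sum_mu[where A="others i ?R" and E="?E" and Ob=Ob and n=n, OF fR Ssub[unfolded D_def]])
        have e2: "(\<Sum>t\<in>others i ?R. u (outcome G (t(i := s'))) * \<mu> ?E t)
            = (\<Sum>t\<in>?S. u (outcome G (t(i := s')))) / real (card ?S)"
          unfolding \<mu>_def D_def
          by (rule sum_mu[where A="others i ?R" and E="?E" and Ob=Ob and n=n, OF fR Ssub[unfolded D_def]])
        assume "\<not> ?thesis"
        hence "(\<Sum>t\<in>?S. u (outcome G (t(i := ss)))) / real (card ?S)
             < (\<Sum>t\<in>?S. u (outcome G (t(i := s')))) / real (card ?S)"
          unfolding e1 e2 by simp
        hence lt: "(\<Sum>t\<in>?S. u (outcome G (t(i := ss)))) < (\<Sum>t\<in>?S. u (outcome G (t(i := s'))))"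
          using cS by (simp add: divide_strict_right_mono_neg divide_less_cancel)
        obtain s'' where s'': "s'' \<in> strats G i" and sp: "\<forall>t \<in> others i (strats G).
          outcome G (t(i := s'')) = (if t \<in> ?E then outcome G (t(i := s')) else outcome G (t(i := ss)))"
          using splice[OF fg hI ssh s'h] by blast
        have diff: "U k s'' = U k ss + ((\<Sum>t\<in>Ob k \<inter> ?E. u (outcome G (t(i := s')))) - (\<Sum>t\<in>Ob k \<inter> ?E. u (outcome G (t(i := ss)))))" for k
        proof -
          have a1: "U k s'' = (\<Sum>t\<in>Ob k \<inter> ?E. u (outcome G (t(i := s'')))) + (\<Sum>t\<in>Ob k - ?E. u (outcome G (t(i := s''))))"
            unfolding U_def using sum.Int_Diff[OF fO] by blast
          have a2: "(\<Sum>t\<in>Ob k \<inter> ?E. u (outcome G (t(i := s'')))) = (\<Sum>t\<in>Ob k \<inter> ?E. u (outcome G (t(i := s'))))"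
          proof (rule sum.cong[OF refl])
            fix t assume t: "t \<in> Ob k \<inter> ?E"
            hence "t \<in> others i (strats G)" using Osub[of k] O0 by auto
            thus "u (outcome G (t(i := s''))) = u (outcome G (t(i := s')))" using sp t by simp
          qed
          have a3: "(\<Sum>t\<in>Ob k - ?E. u (outcome G (t(i := s'')))) = (\<Sum>t\<in>Ob k - ?E. u (outcome G (t(i := ss))))"
          proof (rule sum.cong[OF refl])
            fix t assume t: "t \<in> Ob k - ?E"
            hence "t \<in> others i (strats G)" using Osub[of k] O0 by auto
            thus "u (outcome G (t(i := s''))) = u (outcome G (t(i := ss)))" using sp t by simp
          qed
          have a4: "U k ss = (\<Sum>t\<in>Ob k \<inter> ?E. u (outcome G (t(i := ss)))) + (\<Sum>t\<in>Ob k - ?E. u (outcome G (t(i := ss))))"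
            unfolding U_def using sum.Int_Diff[OF fO] by blast
          show ?thesis using a1 a2 a3 a4 by linarith
        qed
        have "\<forall>k. ?d < k \<and> k < n \<longrightarrow> U k s'' = U k ss"
        proof (intro allI impI)
          fix k assume k: "?d < k \<and> k < n"
          hence "Ob k \<inter> ?E = {}" using dp by (auto simp: Int_commute)
          thus "U k s'' = U k ss" using diff[of k] by simp
        qed
        hence "U ?d s'' \<le> U ?d ss" using lex[OF s'' dp(1)] by blast
        moreover have "Ob ?d \<inter> ?E = ?S" by blast
        ultimately show False using diff[of ?d] lt by simp
      qed
      have "seq_rational G i ?R ss"
        unfolding seq_rational_def using IH u mu_in opt by blast
      thus "ss \<in> osr G (Suc m) i" unfolding osr_Suc osr_step_def using IH by simp
    qed
  qed
  thus ?thesis by blast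
qed


lemma prodR_mono: "(\<And>j. A j \<subseteq> B j) \<Longrightarrow> prodR A \<subseteq> prodR B"
  unfolding prodR_def by blast

theorem corollary1:
  fixes G :: "('i::finite, 'a) game"
  assumes "finite_game G"
  shows "(\<forall>k. prodR (osr G k) \<noteq> {}) \<and> osr_inf G \<noteq> {}
         \<and> (\<exists>K. prodR (osr G K) = prodR (osr G (Suc K))
                \<and> prodR (osr G (Suc K)) = osr_inf G
                \<and> osr_inf G \<noteq> {})"
proof -
  note fg = assms
  have ne: "prodR (osr G k) \<noteq> {}" for k
  proof -
    have "(\<lambda>j. SOME s. s \<in> osr G k j) \<in> prodR (osr G k)"
      unfolding prodR_def using main_step[OF fg] by (simp add: some_in_eq) (metis empty_iff)
    thus ?thesis by blast
  qed
  have fin: "finite (osr G l j)" for l j by (rule finite_subset[OF osr_strats strats_finite[OF fg]])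
  define f where "f l = (\<Sum>j\<in>UNIV. card (osr G l j))" for l
  have fle: "f (Suc l) \<le> f l" for l unfolding f_def
    by (rule sum_mono, rule card_mono[OF fin osr_sub])
  have "\<exists>K. f (Suc K) = f K"
  proof (rule ccontr)
    assume "\<not> ?thesis"
    hence lt: "f (Suc l) < f l" for l using fle le_neq_implies_less by blast
    have "f l + l \<le> f 0" for l
    proof (induction l)
      case (Suc l) thus ?case using lt[of l] by simp
    qed simp
    from this[of "Suc (f 0)"] show False by simp
  qed
  then obtain K where K: "f (Suc K) = f K" by blast
  have eqK: "osr G (Suc K) = osr G K"
  proof
    fix j
    have "card (osr G (Suc K) j) = card (osr G K j)"
    proof (rule ccontr)
      assume "card (osr G (Suc K) j) \<noteq> card (osr G K j)"
      hence "card (osr G (Suc K) j) < card (osr G K j)" using card_mono[OF fin osr_sub] le_neq_implies_less by blast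
      hence "f (Suc K) < f K" unfolding f_def
        using card_mono[OF fin osr_sub] by (intro sum_strict_mono_ex1) auto
      thus False using K by simp
    qed
    thus "osr G (Suc K) j = osr G K j" using card_subset_eq[OF fin osr_sub] by blast
  qed
  have stab: "K \<le> l \<Longrightarrow> osr G l = osr G K" for l
  proof (induction l rule: dec_induct)
    case (step l) thus ?case using eqK by (simp add: osr_Suc)
  qed simp
  have inf: "osr_inf G = prodR (osr G K)"
  proof
    show "osr_inf G \<subseteq> prodR (osr G K)" unfolding osr_inf_def by blast
    show "prodR (osr G K) \<subseteq> osr_inf G" unfolding osr_inf_def
    proof (rule INT_greatest)
      fix l
      show "prodR (osr G K) \<subseteq> prodR (osr G l)"
      proof (cases "l \<le> K")
        case True thus ?thesis by (intro prodR_mono osr_mono)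
      next
        case False thus ?thesis using stab[of l] by simp
      qed
    qed
  qed
  show ?thesis using ne inf eqK by (auto intro!: exI[of _ K])
qed

end
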